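(* Let $G$ be a directed graph without self-loops with integer edge weights. Let $G'$ have vertices $u_A,u_B,u_C$ for each $u\in V(G)$ and, for every edge $(u,v)$ of $G$, edges $(u_A,v_B),(u_B,v_C),(u_C,v_A)$ of the same weight as $(u,v)$. Let $G''$ be obtained from $G'$ by deleting each edge $(u_B,v_C)$ independently with probability $1/2$ and deleting each vertex $u_A$ independently with probability $1/2$. If $G$ has no zero-weight triangle then $G''$ has no zero-weight triangle; if $G$ has a zero-weight triangle then, with probability at least $1/4$, the number of zero-weight triangles in $G''$ is odd.
   Context: A zero-weight triangle in a directed graph is a triple of vertices $a,b,c$ with edges $(a,b),(b,c),(c,a)$ whose weights sum to $0$. *)

theory Defs
  imports "HOL-Probability.Probability"
begin

text \<open>A weighted directed graph is given by a vertex set V, an edge set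
E \<subseteq> V \<times> V, and a weight function w (only its values on edges matter).\<close>

definition zero_triangles ::
  "'v set \<Rightarrow> ('v \<times> 'v) set \<Rightarrow> ('v \<Rightarrow> 'v \<Rightarrow> int) \<Rightarrow> ('v \<times> 'v \<times> 'v) set" where
  "zero_triangles V E w = {(a, b, c). a \<in> V \<and> b \<in> V \<and> c \<in> V \<and>
     (a, b) \<in> E \<and> (b, c) \<in> E \<and> (c, a) \<in> E \<and> w a b + w b c + w c a = 0}"

text \<open>The three copies u_A, u_B, u_C of a vertex u are (u, PA), (u, PB), (u, PC).\<close>
datatype part = PA | PB | PC

definition split_V :: "'a set \<Rightarrow> ('a \<times> part) set" where
  "split_V V = V \<times> UNIV"

definition split_E :: "('a \<times> 'a) set \<Rightarrow> (('a \<times> part) \<times> ('a \<times> part)) set" where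
  "split_E E = {((u, PA), (v, PB)) | u v. (u, v) \<in> E}
             \<union> {((u, PB), (v, PC)) | u v. (u, v) \<in> E}
             \<union> {((u, PC), (v, PA)) | u v. (u, v) \<in> E}"

definition split_w :: "('a \<Rightarrow> 'a \<Rightarrow> int) \<Rightarrow> ('a \<times> part) \<Rightarrow> ('a \<times> part) \<Rightarrow> int" where
  "split_w w x y = w (fst x) (fst y)"

text \<open>The graph G'' for an outcome (D, S): D \<subseteq> E is the set of edges (u,v) of G whose
copy (u_B, v_C) is deleted, S \<subseteq> V the set of vertices u whose copy u_A is deleted
(together with its incident edges).\<close>
definition sampled_V :: "'a set \<Rightarrow> 'a set \<Rightarrow> ('a \<times> part) set" where
  "sampled_V V S = split_V V - {(u, PA) | u. u \<in> S}"

definition sampled_E ::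
  "'a set \<Rightarrow> ('a \<times> 'a) set \<Rightarrow> ('a \<times> 'a) set \<Rightarrow> 'a set \<Rightarrow> (('a \<times> part) \<times> ('a \<times> part)) set" where
  "sampled_E V E D S = {(x, y). (x, y) \<in> split_E E - {((u, PB), (v, PC)) | u v. (u, v) \<in> D}
                           \<and> x \<in> sampled_V V S \<and> y \<in> sampled_V V S}"

end

theory Submission
  imports Defs
begin

definition Tset :: "'a set \<Rightarrow> ('a \<times> 'a) set \<Rightarrow> ('a \<Rightarrow> 'a \<Rightarrow> int) \<Rightarrow> ('a \<times> 'a) set \<Rightarrow> 'a set \<Rightarrow> ('a \<times> 'a \<times> 'a) set" where
  "Tset V E w D S = {t \<in> zero_triangles V E w. fst t \<notin> S \<and> snd t \<notin> D}"

lemma sE_iff: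
  assumes "E \<subseteq> V \<times> V"
  shows "((u,p),(v,q)) \<in> sampled_E V E D S \<longleftrightarrow> (u,v) \<in> E \<and>
     ((p = PA \<and> q = PB \<and> u \<notin> S) \<or> (p = PB \<and> q = PC \<and> (u,v) \<notin> D) \<or> (p = PC \<and> q = PA \<and> v \<notin> S))"
  using assms
  by (cases p; cases q) (auto simp: sampled_E_def split_E_def sampled_V_def split_V_def)

definition r0 :: "'a \<times> 'a \<times> 'a \<Rightarrow> ('a \<times> part) \<times> ('a \<times> part) \<times> ('a \<times> part)" where
  "r0 t = (case t of (a,b,c) \<Rightarrow> ((a,PA),(b,PB),(c,PC)))"
definition r1 :: "'a \<times> 'a \<times> 'a \<Rightarrow> ('a \<times> part) \<times> ('a \<times> part) \<times> ('a \<times> part)" where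
  "r1 t = (case t of (a,b,c) \<Rightarrow> ((b,PB),(c,PC),(a,PA)))"
definition r2 :: "'a \<times> 'a \<times> 'a \<Rightarrow> ('a \<times> part) \<times> ('a \<times> part) \<times> ('a \<times> part)" where
  "r2 t = (case t of (a,b,c) \<Rightarrow> ((c,PC),(a,PA),(b,PB)))"

lemma ZT_eq:
  assumes "E \<subseteq> V \<times> V"
  shows "zero_triangles (sampled_V V S) (sampled_E V E D S) (split_w w)
     = r0 ` Tset V E w D S \<union> r1 ` Tset V E w D S \<union> r2 ` Tset V E w D S"
proof (rule set_eqI)
  fix x :: "('a \<times> part) \<times> ('a \<times> part) \<times> ('a \<times> part)"
  obtain a p b q c r where x: "x = ((a,p),(b,q),(c,r))" by (metis prod.exhaust)
  show "x \<in> zero_triangles (sampled_V V S) (sampled_E V E D S) (split_w w) \<longleftrightarrow>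
     x \<in> r0 ` Tset V E w D S \<union> r1 ` Tset V E w D S \<union> r2 ` Tset V E w D S"
    unfolding x
    using assms
    by (cases p; cases q; cases r)
      (auto simp: zero_triangles_def sE_iff[OF assms] sampled_V_def split_V_def split_w_def
        Tset_def image_iff r0_def r1_def r2_def)
qed

lemma finite_ZT: "finite V \<Longrightarrow> finite (zero_triangles V E w)"
proof -
  assume "finite V"
  have "zero_triangles V E w \<subseteq> V \<times> V \<times> V" by (auto simp: zero_triangles_def)
  thus ?thesis using \<open>finite V\<close> by (meson finite_SigmaI finite_subset)
qed

lemma card_ZT:
  assumes "finite V" "E \<subseteq> V \<times> V"
  shows "card (zero_triangles (sampled_V V S) (sampled_E V E D S) (split_w w)) = 3 * card (Tset V E w D S)"
proof -
  let ?X = "Tset V E w D S"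
  have fX: "finite ?X" using finite_ZT[OF assms(1)] by (simp add: Tset_def)
  have i0: "inj_on r0 ?X" "inj_on r1 ?X" "inj_on r2 ?X"
    by (auto simp: inj_on_def r0_def r1_def r2_def)
  have d1: "r0 ` ?X \<inter> r1 ` ?X = {}" "(r0 ` ?X \<union> r1 ` ?X) \<inter> r2 ` ?X = {}"
    by (auto simp: r0_def r1_def r2_def)
  have "card (r0 ` ?X \<union> r1 ` ?X \<union> r2 ` ?X) = card (r0 ` ?X \<union> r1 ` ?X) + card (r2 ` ?X)"
    using fX d1 by (intro card_Un_disjoint) auto
  also have "card (r0 ` ?X \<union> r1 ` ?X) = card (r0 ` ?X) + card (r1 ` ?X)"
    using fX d1 by (intro card_Un_disjoint) auto
  finally show ?thesis using i0 ZT_eq[OF assms(2)] by (simp add: card_image)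
qed

definition tg :: "'b \<Rightarrow> 'b set \<Rightarrow> 'b set" where
  "tg x A = (if x \<in> A then A - {x} else insert x A)"

lemma key:
  assumes fin: "finite V" and t0: "(a0,b0,c0) \<in> zero_triangles V E w"
  shows "\<exists>D1\<in>{D - {(b0,c0)}, insert (b0,c0) D}. \<exists>S1\<in>{S - {a0}, insert a0 S}.
           odd (card (Tset V E w D1 S1))"
proof -
  let ?T = "zero_triangles V E w"
  define F where "F D = {t\<in>?T. fst t = a0 \<and> snd t \<notin> D}" for D
  have fT: "finite ?T" using finite_ZT[OF fin] .
  have fF: "finite (F D)" for D using fT by (simp add: F_def)
  have fTs: "finite (Tset V E w D S)" for D S using fT by (simp add: Tset_def)
  have c1: "card (Tset V E w D (S - {a0})) = card (Tset V E w D (insert a0 S)) + card (F D)" for D S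
  proof -
    have "Tset V E w D (S - {a0}) = Tset V E w D (insert a0 S) \<union> F D"
      by (auto simp: Tset_def F_def)
    moreover have "Tset V E w D (insert a0 S) \<inter> F D = {}" by (auto simp: Tset_def F_def)
    ultimately show ?thesis using fTs fF by (simp add: card_Un_disjoint)
  qed
  have c2: "card (F (D - {(b0,c0)})) = card (F (insert (b0,c0) D)) + 1"
  proof -
    have "F (D - {(b0,c0)}) = insert (a0,b0,c0) (F (insert (b0,c0) D))"
      using t0 by (auto simp: F_def)
    moreover have "(a0,b0,c0) \<notin> F (insert (b0,c0) D)" by (simp add: F_def)
    ultimately show ?thesis using fF by simp
  qed
  obtain D1 where D1: "D1 \<in> {D - {(b0,c0)}, insert (b0,c0) D}" "odd (card (F D1))"
  proof (cases "odd (card (F (insert (b0,c0) D)))")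
    case True then show ?thesis using that by blast
  next
    case False
    hence "odd (card (F (D - {(b0,c0)})))" using c2 by simp
    then show ?thesis using that by blast
  qed
  show ?thesis
  proof (cases "odd (card (Tset V E w D1 (insert a0 S)))")
    case True then show ?thesis using D1 by blast
  next
    case False
    hence "odd (card (Tset V E w D1 (S - {a0})))" using c1[of D1 S] D1(2) by simp
    then show ?thesis using D1 by blast
  qed
qed

theorem mainTheorem15:
  fixes V :: "'a set" and E :: "('a \<times> 'a) set" and w :: "'a \<Rightarrow> 'a \<Rightarrow> int"
  assumes "finite V" and "E \<subseteq> V \<times> V" and "\<forall>v. (v, v) \<notin> E"
  shows "(zero_triangles V E w = {} \<longrightarrow>
           (\<forall>D S. D \<subseteq> E \<longrightarrow> S \<subseteq> V \<longrightarrow>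
              zero_triangles (sampled_V V S) (sampled_E V E D S) (split_w w) = {}))
       \<and> (zero_triangles V E w \<noteq> {} \<longrightarrow>
           measure_pmf.prob (pmf_of_set (Pow E \<times> Pow V))
             {(D, S). odd (card (zero_triangles (sampled_V V S) (sampled_E V E D S) (split_w w)))}
           \<ge> 1 / 4)"
proof (intro conjI impI)
  assume "zero_triangles V E w = {}"
  thus "\<forall>D S. D \<subseteq> E \<longrightarrow> S \<subseteq> V \<longrightarrow>
              zero_triangles (sampled_V V S) (sampled_E V E D S) (split_w w) = {}"
    using ZT_eq[OF assms(2)] by (simp add: Tset_def)
next
  assume "zero_triangles V E w \<noteq> {}"
  then obtain a0 b0 c0 where t0: "(a0,b0,c0) \<in> zero_triangles V E w" by auto
  hence a0V: "a0 \<in> V" and e0E: "(b0,c0) \<in> E" by (auto simp: zero_triangles_def)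
  have fE: "finite E" using assms(1,2) by (meson finite_SigmaI finite_subset)
  let ?O = "Pow E \<times> Pow V"
  let ?A = "{(D, S). odd (card (zero_triangles (sampled_V V S) (sampled_E V E D S) (split_w w)))}"
  define Od where "Od = ?O \<inter> ?A"
  have fO: "finite ?O" using fE assms(1) by simp
  have neO: "?O \<noteq> {}" by auto
  have OdI: "(D,S) \<in> Od" if "D \<subseteq> E" "S \<subseteq> V" "odd (card (Tset V E w D S))" for D S
    using that card_ZT[OF assms(1,2)] by (simp add: Od_def)
  define \<sigma> where "\<sigma> p = (tg (b0,c0) (fst p), snd p)" for p :: "('a\<times>'a) set \<times> 'a set"
  define \<tau> where "\<tau> p = (fst p, tg a0 (snd p))" for p :: "('a\<times>'a) set \<times> 'a set"
  have sub: "?O \<subseteq> Od \<union> \<sigma> ` Od \<union> \<tau> ` Od \<union> (\<sigma> \<circ> \<tau>) ` Od"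
  proof
    fix p assume p: "p \<in> ?O"
    obtain D S where pDS: "p = (D,S)" by (cases p)
    from key[OF assms(1) t0, of D S] obtain D1 S1 where
      D1: "D1 \<in> {D - {(b0,c0)}, insert (b0,c0) D}" and S1: "S1 \<in> {S - {a0}, insert a0 S}"
      and od: "odd (card (Tset V E w D1 S1))" by blast
    have "D1 \<subseteq> E" "S1 \<subseteq> V" using D1 S1 p pDS e0E a0V by auto
    hence inOd: "(D1,S1) \<in> Od" using OdI od by blast
    have hD: "D = D1 \<or> D = tg (b0,c0) D1" using D1 by (auto simp: tg_def)
    have hS: "S = S1 \<or> S = tg a0 S1" using S1 by (auto simp: tg_def)
    show "p \<in> Od \<union> \<sigma> ` Od \<union> \<tau> ` Od \<union> (\<sigma> \<circ> \<tau>) ` Od"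
    proof -
      have "(D,S) = (D1,S1) \<or> (D,S) = \<sigma> (D1,S1) \<or> (D,S) = \<tau> (D1,S1) \<or> (D,S) = (\<sigma> \<circ> \<tau>) (D1,S1)"
        using hD hS by (auto simp: \<sigma>_def \<tau>_def)
      thus ?thesis using inOd pDS by blast
    qed
  qed
  have fOd: "finite Od" using fO by (simp add: Od_def)
  have "card ?O \<le> card (Od \<union> \<sigma> ` Od \<union> \<tau> ` Od \<union> (\<sigma> \<circ> \<tau>) ` Od)"
    using sub fOd by (intro card_mono) auto
  also have "\<dots> \<le> card Od + card (\<sigma> ` Od) + card (\<tau> ` Od) + card ((\<sigma> \<circ> \<tau>) ` Od)"
    by (meson add_le_mono card_Un_le le_refl order_trans)
  also have "\<dots> \<le> 4 * card Od"
    using card_image_le[OF fOd, of \<sigma>] card_image_le[OF fOd, of \<tau>] card_image_le[OF fOd, of "\<sigma> \<circ> \<tau>"]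
    by linarith
  finally have le: "card ?O \<le> 4 * card Od" .
  have pos: "card ?O > 0" using fO neO by (simp add: card_gt_0_iff)
  have "measure_pmf.prob (pmf_of_set ?O) ?A = card Od / card ?O"
    using measure_pmf_of_set[OF neO fO, of ?A] by (simp add: Od_def)
  moreover have "real (card ?O) \<le> 4 * real (card Od)" using le by linarith
  moreover have "1/4 \<le> real (card Od) / real (card ?O)"
    using pos \<open>real (card ?O) \<le> 4 * real (card Od)\<close> by (simp add: field_simps)
  ultimately show "measure_pmf.prob (pmf_of_set ?O) ?A \<ge> 1/4" by simp
qed

end
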